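(* Let $(J,\mathcal F)$ and coefficients $w^S_j>0$ ($j\in S\in\mathcal F$) be as in the context. For every input $\mathbf c\in\mathbb R^J$, algorithms $\mathrm{AG}_1$ and $\mathrm{AG}_2$ are equivalent: when ties in the minimizations are broken in the same way, they produce the same output $(\mathit{ADMISSIBLE},\boldsymbol\pi,\boldsymbol\nu)$.
   Context: $J$ finite, $|J|=n$; $\mathcal F\subseteq2^J$, $\emptyset\in\mathcal F$, each nonempty $S\in\mathcal F$ has nonempty $\partial^-S=\{j\in S:S\setminus\{j\}\in\mathcal F\}$, each $S\in\mathcal F$, $S\ne J$, has $j\in J\setminus S$ with $S\cup\{j\}\in\mathcal F$. $\mathrm{AG}_1$ on input $\mathbf c$: $S_1=J$, $y^{S_1}=\min\{c_j/w^{S_1}_j:j\in\partial^-S_1\}$, $\pi_1$ a minimizer, $\nu_{\pi_1}=y^{S_1}$; for $k=2..n$: $S_k=S_{k-1}\setminus\{\pi_{k-1}\}$, $y^{S_k}=\min\{(c_j-\sum_{l=1}^{k-1}y^{S_l}w^{S_l}_j)/w^{S_k}_j:j\in\partial^-S_k\}$, $\pi_k$ a minimizer, $\nu_{\pi_k}=\nu_{\pi_{k-1}}+y^{S_k}$. $\mathrm{AG}_2$ on input $\mathbf c$: $S_1=J$, $\nu^{S_1}_j=c_j/w^{S_1}_j$ ($j\in J$), $\pi_1\in\arg\min\{\nu^{S_1}_j:j\in\partial^-S_1\}$, $\nu_{\pi_1}=\nu^{S_1}_{\pi_1}$; for $k=2..n$: $S_k=S_{k-1}\setminus\{\pi_{k-1}\}$,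 $\nu^{S_k}_j=\nu^{S_{k-1}}_j+\left(\frac{w^{S_{k-1}}_j}{w^{S_k}_j}-1\right)[\nu^{S_{k-1}}_j-\nu^{S_{k-1}}_{\pi_{k-1}}]$ for $j\in S_k$, $\pi_k\in\arg\min\{\nu^{S_k}_j:j\in\partial^-S_k\}$, $\nu_{\pi_k}=\nu^{S_k}_{\pi_k}$. Both set $\mathit{ADMISSIBLE}=\mathit{TRUE}$ if $\nu_{\pi_1}\le\cdots\le\nu_{\pi_n}$ and $\mathit{FALSE}$ otherwise. *)

theory Defs
  imports Complex_Main
begin

definition set_system :: "'a set \<Rightarrow> 'a set set \<Rightarrow> bool" where
  "set_system J F \<longleftrightarrow> finite J \<and> F \<subseteq> Pow J \<and> {} \<in> F
     \<and> (\<forall>S\<in>F. S \<noteq> {} \<longrightarrow> (\<exists>j\<in>S. S - {j} \<in> F))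
     \<and> (\<forall>S\<in>F. S \<noteq> J \<longrightarrow> (\<exists>j\<in>J - S. insert j S \<in> F))"

definition dminus :: "'a set set \<Rightarrow> 'a set \<Rightarrow> 'a set" where
  "dminus F S = {j \<in> S. S - {j} \<in> F}"

(* Steps are indexed from 0: p 0, ..., p (n-1) correspond to pi_1, ..., pi_n;
   Sset J p k corresponds to S_{k+1}. *)
primrec Sset :: "'a set \<Rightarrow> (nat \<Rightarrow> 'a) \<Rightarrow> nat \<Rightarrow> 'a set" where
  "Sset J p 0 = J"
| "Sset J p (Suc k) = Sset J p k - {p k}"

(* ag1_ys ... k = [y^{S_1}, ..., y^{S_k}] *)
primrec ag1_ys :: "'a set \<Rightarrow> 'a set set \<Rightarrow> ('a set \<Rightarrow> 'a \<Rightarrow> real) \<Rightarrow> ('a \<Rightarrow> real)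
      \<Rightarrow> (nat \<Rightarrow> 'a) \<Rightarrow> nat \<Rightarrow> real list" where
  "ag1_ys J F w c p 0 = []"
| "ag1_ys J F w c p (Suc k) =
     (let ys = ag1_ys J F w c p k in
       ys @ [Min ((\<lambda>j. (c j - (\<Sum>l<k. ys ! l * w (Sset J p l) j)) / w (Sset J p k) j)
                   ` dminus F (Sset J p k))])"

definition ag1_val :: "'a set \<Rightarrow> 'a set set \<Rightarrow> ('a set \<Rightarrow> 'a \<Rightarrow> real) \<Rightarrow> ('a \<Rightarrow> real)
      \<Rightarrow> (nat \<Rightarrow> 'a) \<Rightarrow> nat \<Rightarrow> 'a \<Rightarrow> real" where
  "ag1_val J F w c p k j =
     (c j - (\<Sum>l<k. ag1_ys J F w c p k ! l * w (Sset J p l) j)) / w (Sset J p k) j"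

definition ag1_y :: "'a set \<Rightarrow> 'a set set \<Rightarrow> ('a set \<Rightarrow> 'a \<Rightarrow> real) \<Rightarrow> ('a \<Rightarrow> real)
      \<Rightarrow> (nat \<Rightarrow> 'a) \<Rightarrow> nat \<Rightarrow> real" where
  "ag1_y J F w c p k = ag1_ys J F w c p (Suc k) ! k"

definition ag1_ok :: "'a set \<Rightarrow> 'a set set \<Rightarrow> ('a set \<Rightarrow> 'a \<Rightarrow> real) \<Rightarrow> ('a \<Rightarrow> real)
      \<Rightarrow> (nat \<Rightarrow> 'a) \<Rightarrow> nat \<Rightarrow> bool" where
  "ag1_ok J F w c p k \<longleftrightarrow> p k \<in> dminus F (Sset J p k)
      \<and> ag1_val J F w c p k (p k) = ag1_y J F w c p k"

definition ag1_nu :: "'a set \<Rightarrow> 'a set set \<Rightarrow> ('a set \<Rightarrow> 'a \<Rightarrow> real) \<Rightarrow> ('a \<Rightarrow> real)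
      \<Rightarrow> (nat \<Rightarrow> 'a) \<Rightarrow> nat \<Rightarrow> real" where
  "ag1_nu J F w c p k = (\<Sum>l\<le>k. ag1_y J F w c p l)"

(* ag2_vec ... k j = nu^{S_{k+1}}_j *)
primrec ag2_vec :: "'a set \<Rightarrow> ('a set \<Rightarrow> 'a \<Rightarrow> real) \<Rightarrow> ('a \<Rightarrow> real)
      \<Rightarrow> (nat \<Rightarrow> 'a) \<Rightarrow> nat \<Rightarrow> 'a \<Rightarrow> real" where
  "ag2_vec J w c p 0 = (\<lambda>j. c j / w J j)"
| "ag2_vec J w c p (Suc k) = (\<lambda>j.
     ag2_vec J w c p k j
     + (w (Sset J p k) j / w (Sset J p (Suc k)) j - 1)
       * (ag2_vec J w c p k j - ag2_vec J w c p k (p k)))"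

definition ag2_ok :: "'a set \<Rightarrow> 'a set set \<Rightarrow> ('a set \<Rightarrow> 'a \<Rightarrow> real) \<Rightarrow> ('a \<Rightarrow> real)
      \<Rightarrow> (nat \<Rightarrow> 'a) \<Rightarrow> nat \<Rightarrow> bool" where
  "ag2_ok J F w c p k \<longleftrightarrow> p k \<in> dminus F (Sset J p k)
      \<and> (\<forall>j\<in>dminus F (Sset J p k). ag2_vec J w c p k (p k) \<le> ag2_vec J w c p k j)"

definition ag2_nu :: "'a set \<Rightarrow> ('a set \<Rightarrow> 'a \<Rightarrow> real) \<Rightarrow> ('a \<Rightarrow> real)
      \<Rightarrow> (nat \<Rightarrow> 'a) \<Rightarrow> nat \<Rightarrow> real" where
  "ag2_nu J w c p k = ag2_vec J w c p k (p k)"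

definition admissible :: "nat \<Rightarrow> (nat \<Rightarrow> real) \<Rightarrow> bool" where
  "admissible n nu \<longleftrightarrow> (\<forall>k. Suc k < n \<longrightarrow> nu k \<le> nu (Suc k))"

end

theory Submission
  imports Defs
begin

lemma ys_len: "length (ag1_ys J F w c p k) = k"
  by (induction k) (simp_all add: Let_def)

lemma ys_nth: "l < k \<Longrightarrow> ag1_ys J F w c p k ! l = ag1_y J F w c p l"
proof (induction k)
  case 0 then show ?case by simp
next
  case (Suc k)
  show ?case
  proof (cases "l = k")
    case True then show ?thesis by (simp add: ag1_y_def)
  next
    case False
    then have "l < k" using Suc.prems by simp
    then show ?thesis using Suc.IH by (simp add: Let_def nth_append ys_len)
  qed
qed

lemma val_eq: "ag1_val J F w c p k j =
   (c j - (\<Sum>l<k. ag1_y J F w c p l * w (Sset J p l) j)) / w (Sset J p k) j"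
  unfolding ag1_val_def by (simp add: ys_nth)

lemma y_eq: "ag1_y J F w c p k = Min ((\<lambda>j. ag1_val J F w c p k j) ` dminus F (Sset J p k))"
  unfolding ag1_y_def ag1_val_def by (simp add: Let_def ys_len nth_append)

lemma J_in_F:
  assumes sys: "set_system J F" shows "J \<in> F"
proof -
  have fin: "finite J" and sub: "F \<subseteq> Pow J" and e: "{} \<in> F"
    and ext: "\<forall>S\<in>F. S \<noteq> J \<longrightarrow> (\<exists>j\<in>J - S. insert j S \<in> F)"
    using sys unfolding set_system_def by auto
  have finF: "finite F" using fin sub finite_subset[of F "Pow J"] by simp
  define m where "m = Max (card ` F)"
  have "m \<in> card ` F" unfolding m_def using finF e by (intro Max_in) auto
  then obtain S where S: "S \<in> F" "card S = m" by auto
  show ?thesis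
  proof (rule ccontr)
    assume "J \<notin> F"
    then have "S \<noteq> J" using S by auto
    then obtain j where j: "j \<in> J - S" "insert j S \<in> F" using ext S by auto
    have "S \<subseteq> J" using S sub by auto
    then have "finite S" using fin finite_subset by auto
    then have "card (insert j S) = Suc m" using j S by simp
    moreover have "card (insert j S) \<le> m" unfolding m_def using finF j by simp
    ultimately show False by simp
  qed
qed

lemma alg:
  fixes a b r N y :: real
  assumes "a > 0" "b > 0"
  shows "r / a + N + (a / b - 1) * (r / a + N - (y + N)) = (r - y * a) / b + (N + y)"
proof -
  have e: "(a / b) * (r / a) = r / b" using assms by simp
  have "r / a + N + (a / b - 1) * (r / a + N - (y + N))
      = r / a + N + (a / b) * (r / a) - (a / b) * y - r / a + y"
    by (simp add: algebra_simps)
  also have "\<dots> = r / b - y * a / b + (N + y)" using e by simp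
  also have "\<dots> = (r - y * a) / b + (N + y)" by (simp add: diff_divide_distrib)
  finally show ?thesis .
qed

lemma invariant:
  assumes sys: "set_system J F"
    and wpos: "\<forall>S\<in>F. \<forall>j\<in>S. w S j > 0"
    and ok: "\<forall>l<k. ag1_ok J F w c p l"
  shows "Sset J p k \<in> F \<and> (\<forall>j\<in>Sset J p k. ag2_vec J w c p k j
           = ag1_val J F w c p k j + (\<Sum>l<k. ag1_y J F w c p l))"
  using ok
proof (induction k)
  case 0
  then show ?case using J_in_F[OF sys] by (simp add: val_eq)
next
  case (Suc k)
  let ?S = "Sset J p k"
  let ?S' = "Sset J p (Suc k)"
  let ?y = "\<lambda>l. ag1_y J F w c p l"
  have IH: "?S \<in> F" "\<forall>j\<in>?S. ag2_vec J w c p k j = ag1_val J F w c p k j + (\<Sum>l<k. ?y l)"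
    using Suc by auto
  have okk: "ag1_ok J F w c p k" using Suc.prems by auto
  then have pk: "p k \<in> ?S" "?S - {p k} \<in> F" and yk: "ag1_val J F w c p k (p k) = ?y k"
    unfolding ag1_ok_def dminus_def by auto
  have S'F: "?S' \<in> F" using pk by simp
  have "ag2_vec J w c p (Suc k) j = ag1_val J F w c p (Suc k) j + (\<Sum>l<Suc k. ?y l)"
    if j: "j \<in> ?S'" for j
  proof -
    have jS: "j \<in> ?S" using j by simp
    have w1: "w ?S j > 0" using wpos IH jS by auto
    have w2: "w ?S' j > 0" using wpos S'F j by auto
    define r where "r = c j - (\<Sum>l<k. ?y l * w (Sset J p l) j)"
    define N where "N = (\<Sum>l<k. ?y l)"
    have a: "ag1_val J F w c p k j = r / w ?S j" unfolding r_def by (simp add: val_eq)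
    have a': "ag1_val J F w c p (Suc k) j = (r - ?y k * w ?S j) / w ?S' j"
      unfolding r_def val_eq[of J F w c p "Suc k"] by (simp add: algebra_simps)
    have vj: "ag2_vec J w c p k j = r / w ?S j + N" using IH jS a N_def by simp
    have vp: "ag2_vec J w c p k (p k) = ?y k + N" using IH pk yk N_def by simp
    have "ag2_vec J w c p (Suc k) j = r / w ?S j + N
         + (w ?S j / w ?S' j - 1) * (r / w ?S j + N - (?y k + N))"
      using vj vp by simp
    also have "\<dots> = (r - ?y k * w ?S j) / w ?S' j + (N + ?y k)"
      using alg[of "w ?S j" "w ?S' j" r N "?y k"] w1 w2 by simp
    finally show ?thesis using a' N_def by simp
  qed
  then show ?case using S'F by blast
qed

lemma step_equiv:
  assumes sys: "set_system J F"
    and wpos: "\<forall>S\<in>F. \<forall>j\<in>S. w S j > 0"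
    and ok: "\<forall>l<k. ag1_ok J F w c p l"
  shows "ag1_ok J F w c p k \<longleftrightarrow> ag2_ok J F w c p k"
proof -
  note inv = invariant[OF sys wpos ok]
  let ?D = "dminus F (Sset J p k)"
  let ?a = "\<lambda>j. ag1_val J F w c p k j"
  have fin: "finite ?D"
  proof -
    have "Sset J p k \<subseteq> J" using sys inv unfolding set_system_def by auto
    moreover have "finite J" using sys unfolding set_system_def by simp
    ultimately have "finite (Sset J p k)" by (rule finite_subset)
    then show ?thesis unfolding dminus_def by simp
  qed
  have DS: "?D \<subseteq> Sset J p k" unfolding dminus_def by auto
  show ?thesis
  proof (cases "p k \<in> ?D")
    case False then show ?thesis unfolding ag1_ok_def ag2_ok_def by simp
  next
    case True
    have "ag1_ok J F w c p k \<longleftrightarrow> ?a (p k) = Min (?a ` ?D)"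
      unfolding ag1_ok_def using True y_eq by metis
    also have "\<dots> \<longleftrightarrow> (\<forall>j\<in>?D. ?a (p k) \<le> ?a j)"
    proof
      assume "?a (p k) = Min (?a ` ?D)" then show "\<forall>j\<in>?D. ?a (p k) \<le> ?a j"
        using fin by simp
    next
      assume h: "\<forall>j\<in>?D. ?a (p k) \<le> ?a j"
      show "?a (p k) = Min (?a ` ?D)"
      proof (rule antisym)
        show "?a (p k) \<le> Min (?a ` ?D)"
          using fin True h by (subst Min_ge_iff) auto
        show "Min (?a ` ?D) \<le> ?a (p k)" using fin True by simp
      qed
    qed
    also have "\<dots> \<longleftrightarrow> ag2_ok J F w c p k"
    proof -
      have vD: "ag2_vec J w c p k j = ?a j + (\<Sum>l<k. ag1_y J F w c p l)" if "j \<in> ?D" for j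
        using inv DS that by auto
      show ?thesis unfolding ag2_ok_def using True by (simp add: vD)
    qed
    finally show ?thesis .
  qed
qed

lemma prefix_equiv:
  assumes sys: "set_system J F"
    and wpos: "\<forall>S\<in>F. \<forall>j\<in>S. w S j > 0"
  shows "(\<forall>l<k. ag1_ok J F w c p l) \<longleftrightarrow> (\<forall>l<k. ag2_ok J F w c p l)"
proof (induction k)
  case 0 then show ?case by simp
next
  case (Suc k)
  have "(\<forall>l<Suc k. ag1_ok J F w c p l) \<longleftrightarrow> (\<forall>l<k. ag1_ok J F w c p l) \<and> ag1_ok J F w c p k"
    using less_Suc_eq by auto
  also have "\<dots> \<longleftrightarrow> (\<forall>l<k. ag2_ok J F w c p l) \<and> ag2_ok J F w c p k"
  proof (cases "\<forall>l<k. ag1_ok J F w c p l")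
    case True
    then show ?thesis using Suc.IH step_equiv[OF sys wpos True] by simp
  next
    case False
    then show ?thesis using Suc.IH by auto
  qed
  also have "\<dots> \<longleftrightarrow> (\<forall>l<Suc k. ag2_ok J F w c p l)"
    using less_Suc_eq by auto
  finally show ?case .
qed

lemma nu_eq:
  assumes sys: "set_system J F"
    and wpos: "\<forall>S\<in>F. \<forall>j\<in>S. w S j > 0"
    and ok: "\<forall>l\<le>k. ag1_ok J F w c p l"
  shows "ag1_nu J F w c p k = ag2_nu J w c p k"
proof -
  have ok': "\<forall>l<k. ag1_ok J F w c p l" using ok by auto
  note inv = invariant[OF sys wpos ok']
  have okk: "ag1_ok J F w c p k" using ok by auto
  then have pk: "p k \<in> Sset J p k" and yk: "ag1_val J F w c p k (p k) = ag1_y J F w c p k"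
    unfolding ag1_ok_def dminus_def by auto
  have "ag2_nu J w c p k = ag1_y J F w c p k + (\<Sum>l<k. ag1_y J F w c p l)"
    unfolding ag2_nu_def using inv pk yk by simp
  also have "\<dots> = ag1_nu J F w c p k"
    unfolding ag1_nu_def by (simp add: lessThan_Suc_atMost[symmetric])
  finally show ?thesis by simp
qed

theorem theorem3:
  fixes J :: "'a set" and F :: "'a set set" and w :: "'a set \<Rightarrow> 'a \<Rightarrow> real"
    and c :: "'a \<Rightarrow> real" and p :: "nat \<Rightarrow> 'a"
  assumes sys: "set_system J F"
    and wpos: "\<forall>S\<in>F. \<forall>j\<in>S. w S j > 0"
  shows "(\<forall>k\<le>card J. (\<forall>l<k. ag1_ok J F w c p l) \<longleftrightarrow> (\<forall>l<k. ag2_ok J F w c p l))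
       \<and> (\<forall>k<card J. (\<forall>l\<le>k. ag1_ok J F w c p l) \<longrightarrow> ag1_nu J F w c p k = ag2_nu J w c p k)
       \<and> ((\<forall>l<card J. ag1_ok J F w c p l) \<longrightarrow>
            (admissible (card J) (ag1_nu J F w c p) \<longleftrightarrow> admissible (card J) (ag2_nu J w c p)))"
proof (intro conjI allI impI)
  fix k show "(\<forall>l<k. ag1_ok J F w c p l) \<longleftrightarrow> (\<forall>l<k. ag2_ok J F w c p l)"
    using prefix_equiv[OF sys wpos] .
next
  fix k assume "k < card J" "\<forall>l\<le>k. ag1_ok J F w c p l"
  then show "ag1_nu J F w c p k = ag2_nu J w c p k" using nu_eq[OF sys wpos] by blast
next
  assume ok: "\<forall>l<card J. ag1_ok J F w c p l"
  have eq: "ag1_nu J F w c p k = ag2_nu J w c p k" if "k < card J" for k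
    using nu_eq[OF sys wpos] ok that by auto
  show "admissible (card J) (ag1_nu J F w c p) \<longleftrightarrow> admissible (card J) (ag2_nu J w c p)"
    unfolding admissible_def using eq by (metis Suc_lessD)
qed

end
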